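(* Let $R$ be a commutative ring and let $R^{(-1)}R$ denote the pointwise localization of $R$ with respect to the subset $S=R$. Then $\mathrm{Spec}(R^{(-1)}R)$ is Hausdorff with respect to the Zariski topology, and also Hausdorff with respect to the flat topology.
   Context: For $a,b$ in a commutative ring, $b$ is a pointwise inverse of $a$ if $a=a^2b$ and $b=b^2a$. For a subset $S\subseteq R$, $S^{(-1)}R=R[x_s:s\in S]/I$ where $I$ is generated by $sx_s^2-x_s$ and $s^2x_s-s$ ($s\in S$). The flat topology on $\mathrm{Spec}(A)$ is the topology having as a basis of open sets the sets $V(I)=\{\mathfrak p:I\subseteq\mathfrak p\}$ with $I$ ranging over finitely generated ideals of $A$. *)

theory Defs
  imports "HOL-Analysis.T1_Spaces" "HOL-Algebra.QuotRing" "HOL-Library.Poly_Mapping"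
begin

text \<open>Polynomials over a commutative ring 'a in variables indexed by a type 'v:
  finitely supported maps from monomials (finitely supported exponent vectors) to coefficients.\<close>
type_synonym ('v, 'a) mpoly = "('v \<Rightarrow>\<^sub>0 nat) \<Rightarrow>\<^sub>0 'a"

definition poly_ring :: "('v, 'a::comm_ring_1) mpoly ring" where
  "poly_ring = \<lparr>carrier = UNIV, mult = (*), one = 1, zero = 0, add = (+)\<rparr>"

definition pconst :: "'a::comm_ring_1 \<Rightarrow> ('v, 'a) mpoly" where
  "pconst c = Poly_Mapping.single 0 c"

definition pvar :: "'v \<Rightarrow> ('v, 'a::comm_ring_1) mpoly" where
  "pvar v = Poly_Mapping.single (Poly_Mapping.single v 1) 1"

definition ptwise_ideal :: "'a::comm_ring_1 set \<Rightarrow> ('a, 'a) mpoly set" where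
  "ptwise_ideal S = genideal poly_ring
     (\<Union>s\<in>S. {pconst s * pvar s ^ 2 - pvar s, pconst s ^ 2 * pvar s - pconst s})"

definition ptwise_loc :: "'a::comm_ring_1 set \<Rightarrow> ('a, 'a) mpoly set ring" where
  "ptwise_loc S = poly_ring Quot (ptwise_ideal S)"

definition Spec :: "('b, 'c) ring_scheme \<Rightarrow> 'b set set" where
  "Spec A = {P. primeideal P A}"

definition Vset :: "('b, 'c) ring_scheme \<Rightarrow> 'b set \<Rightarrow> 'b set set" where
  "Vset A J = {P \<in> Spec A. J \<subseteq> P}"

definition zariski_top :: "('b, 'c) ring_scheme \<Rightarrow> 'b set topology" where
  "zariski_top A = topology_generated_by {Spec A - Vset A J | J. ideal J A}"

definition flat_top :: "('b, 'c) ring_scheme \<Rightarrow> 'b set topology" where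
  "flat_top A = topology_generated_by
     {Vset A (genideal A F) | F. finite F \<and> F \<subseteq> carrier A}"

end

theory Submission
  imports Defs
begin

lemma poly_ring_cring: "cring (poly_ring :: ('v, 'a::comm_ring_1) mpoly ring)"
proof (rule cringI)
  show "abelian_group (poly_ring :: ('v, 'a) mpoly ring)"
    by (rule abelian_groupI) (auto simp: poly_ring_def intro: left_minus)
  show "Group.comm_monoid (poly_ring :: ('v, 'a) mpoly ring)"
    by (rule monoid.monoid_comm_monoidI) (auto intro!: monoidI simp: poly_ring_def mult.assoc mult.commute)
qed (auto simp: poly_ring_def distrib_right)

lemma pconst_mult: "pconst (a * b) = (pconst a * pconst b :: ('v, 'a::comm_ring_1) mpoly)"
  by (simp add: pconst_def mult_single)
lemma pconst_add: "pconst (a + b) = (pconst a + pconst b :: ('v, 'a::comm_ring_1) mpoly)"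
  by (simp add: pconst_def single_add)
lemma pconst_diff: "pconst (a - b) = (pconst a - pconst b :: ('v, 'a::comm_ring_1) mpoly)"
  by (simp add: pconst_def single_diff)
lemma pconst_one: "pconst 1 = (1 :: ('v, 'a::comm_ring_1) mpoly)"
  by (simp add: pconst_def)

lemma update_as_add: "a \<notin> Poly_Mapping.keys f \<Longrightarrow> Poly_Mapping.update a b f = f + Poly_Mapping.single a b"
  by (rule poly_mapping_eqI) (auto simp: lookup_update lookup_add lookup_single in_keys_iff when_def)

lemma poly_induct:
  fixes \<Phi> :: "('v, 'a::comm_ring_1) mpoly \<Rightarrow> bool"
  assumes C: "\<And>c. \<Phi> (pconst c)" and V: "\<And>v. \<Phi> (pvar v)"
    and A: "\<And>f g. \<Phi> f \<Longrightarrow> \<Phi> g \<Longrightarrow> \<Phi> (f + g)"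
    and M: "\<And>f g. \<Phi> f \<Longrightarrow> \<Phi> g \<Longrightarrow> \<Phi> (f * g)"
  shows "\<Phi> f"
proof -
  have one: "\<Phi> 1" using C[of 1] by (simp add: pconst_one)
  have pw: "\<Phi> (pvar v ^ k)" for v k
    by (induct k) (auto simp: one intro: M V)
  have sv: "Poly_Mapping.single (Poly_Mapping.single v k) 1 = (pvar v ^ k :: ('v, 'a) mpoly)" for v k
  proof (induct k)
    case 0 then show ?case by simp
  next
    case (Suc k)
    have "Poly_Mapping.single v (Suc k) = Poly_Mapping.single v 1 + Poly_Mapping.single v k"
      by (simp add: single_add[symmetric])
    have "(pvar v ^ Suc k :: ('v, 'a) mpoly) = pvar v * Poly_Mapping.single (Poly_Mapping.single v k) 1"
      using Suc by simp
    also have "\<dots> = Poly_Mapping.single (Poly_Mapping.single v (Suc k)) 1"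
      unfolding pvar_def mult_single \<open>Poly_Mapping.single v (Suc k) = _\<close> by simp
    finally show ?case by simp
  qed
  have mon: "\<Phi> (Poly_Mapping.single m 1)" for m :: "'v \<Rightarrow>\<^sub>0 nat"
  proof (induct m rule: update_induct)
    case const then show ?case using one by simp
  next
    case (update m v k)
    have "Poly_Mapping.single (Poly_Mapping.update v k m) (1::'a)
        = Poly_Mapping.single m 1 * Poly_Mapping.single (Poly_Mapping.single v k) 1"
      using update by (simp add: update_as_add mult_single)
    then show ?case using update M pw sv by metis
  qed
  have mon2: "\<Phi> (Poly_Mapping.single m c)" for m c
  proof -
    have "Poly_Mapping.single m c = pconst c * (Poly_Mapping.single m 1 :: ('v, 'a) mpoly)"
      by (simp add: pconst_def mult_single)
    then show ?thesis using M C mon by metis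
  qed
  show ?thesis
  proof (induct f rule: update_induct)
    case const then show ?case using C[of 0] by (simp add: pconst_def)
  next
    case (update f a b)
    then show ?case using A mon2 by (simp add: update_as_add)
  qed
qed

lemma sep_core:
  fixes A (structure) and h :: "('a, 'a::comm_ring_1) mpoly \<Rightarrow> 'b"
  assumes cr: "cring A" and hom: "h \<in> ring_hom poly_ring A"
    and rel1: "\<And>s. h (pconst s * pvar s * pvar s) = h (pvar s)"
    and rel2: "\<And>s. h (pconst s * pconst s * pvar s) = h (pconst s)"
    and Pp: "primeideal P A" and Qp: "primeideal Q A"
    and agree: "\<And>r. h (pconst r) \<in> P \<longleftrightarrow> h (pconst r) \<in> Q"
    and surj: "\<And>x. x \<in> carrier A \<Longrightarrow> \<exists>f. x = h f"
  shows "P \<subseteq> Q"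
proof -
  interpret cring A by (rule cr)
  interpret P: primeideal P A by (rule Pp)
  interpret Q: primeideal Q A by (rule Qp)
  have hc[simp]: "h f \<in> carrier A" for f
    using ring_hom_closed[OF hom, of f] by (simp add: poly_ring_def)
  have hm: "h (f * g) = h f \<otimes> h g" for f g
    using ring_hom_mult[OF hom, of f g] by (simp add: poly_ring_def)
  have ha: "h (f + g) = h f \<oplus> h g" for f g
    using ring_hom_add[OF hom, of f g] by (simp add: poly_ring_def)
  have h1: "h 1 = \<one>"
    using ring_hom_one[OF hom] by (simp add: poly_ring_def)
  have h0: "h 0 = \<zero>"
  proof -
    have "h 0 \<oplus> h 0 = h 0 \<oplus> \<zero>" using ha[of 0 0] by simp
    then show ?thesis using add.l_cancel_one[of "h 0" "h 0"] by simp
  qed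
  have hd: "h (f - g) = h f \<ominus> h g" for f g
  proof -
    have "h (f - g) \<oplus> h g = h f" using ha[of "f - g" g] by simp
    then show ?thesis
      by (metis a_minus_def add.inv_solve_right hc)
  qed
  have hdz: "h f = h g \<Longrightarrow> h (f - g) = \<zero>" for f g
    by (simp add: hd r_neg a_minus_def)
  have Pone: "\<one> \<notin> P" using P.one_imp_carrier P.I_notcarr by blast
  have Qone: "\<one> \<notin> Q" using Q.one_imp_carrier Q.I_notcarr by blast
  define T where "T f \<longleftrightarrow> (\<exists>c r. h (pconst c) \<notin> P \<and> h (pconst c * f - pconst r) \<in> P
       \<and> h (pconst c * f - pconst r) \<in> Q)" for f
  have cQ: "h (pconst c) \<notin> Q" if "h (pconst c) \<notin> P" for c using that agree by blast
  have prod_notP: "h (pconst (c1 * c2)) \<notin> P" if "h (pconst c1) \<notin> P" "h (pconst c2) \<notin> P" for c1 c2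
    using that P.I_prime[of "h (pconst c1)" "h (pconst c2)"] by (auto simp add: pconst_mult hm)
  have "T f" for f
  proof (induct f rule: poly_induct)
    case (1 a)
    have "h (pconst 1 * pconst a - pconst a) = \<zero>" by (simp add: h0 pconst_one)
    moreover have "h (pconst 1) \<notin> P" using Pone h1 by (simp add: pconst_one)
    ultimately show ?case unfolding T_def using P.zero_closed Q.zero_closed by metis
  next
    case (2 s)
    show ?case
    proof (cases "h (pconst s) \<in> P")
      case True
      have eq: "h (pconst 1 * pvar s - pconst 0) = h (pconst s) \<otimes> (h (pvar s) \<otimes> h (pvar s))"
        using rel1[of s] by (simp add: pconst_one hm m_assoc, simp add: pconst_def)
      have "h (pconst s) \<in> Q" using True agree by blast
      have "h (pconst 1) \<notin> P" using Pone h1 by (simp add: pconst_one)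
      moreover have "h (pconst 1 * pvar s - pconst 0) \<in> P" "h (pconst 1 * pvar s - pconst 0) \<in> Q"
        using True \<open>h (pconst s) \<in> Q\<close> unfolding eq by (simp_all add: P.I_r_closed Q.I_r_closed)
      ultimately show ?thesis unfolding T_def by blast
    next
      case False
      have F2: "h (pconst s) \<notin> Q" using False agree by blast
      define e where "e = h (pconst s * pvar s)"
      define d where "d = h (pconst s * pvar s - pconst 1)"
      have "h (pconst s * pconst s * pvar s * pvar s) = h (pconst s * pvar s)"
        using hm[of "pconst s * pconst s * pvar s" "pvar s"] hm[of "pconst s" "pvar s"] rel2[of s] by simp
      then have "h (pconst s * pconst s * pvar s * pvar s - pconst s * pvar s) = \<zero>" by (rule hdz)
      moreover have "pconst s * pconst s * pvar s * pvar s - pconst s * pvar s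
          = (pconst s * pvar s) * (pconst s * pvar s - pconst 1)"
        by (simp add: pconst_one algebra_simps)
      ultimately have ed: "e \<otimes> d = \<zero>" unfolding e_def d_def by (simp add: hm)
      have eq2: "h (pconst s) = h (pconst s) \<otimes> e"
        unfolding e_def using rel2[of s] by (simp add: hm m_assoc)
      have "e \<notin> P" using eq2 False P.I_l_closed[of e "h (pconst s)"] by (metis hc)
      moreover have "e \<notin> Q" using eq2 F2 Q.I_l_closed[of e "h (pconst s)"] by (metis hc)
      ultimately have "d \<in> P" "d \<in> Q"
        using P.I_prime[of e d] Q.I_prime[of e d] ed P.zero_closed Q.zero_closed
        unfolding e_def d_def by auto
      then show ?thesis unfolding T_def d_def using False by blast
    qed
  next
    case (3 f g)
    from 3(1) obtain c1 r1 where A1: "h (pconst c1) \<notin> P" "h (pconst c1 * f - pconst r1) \<in> P"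
       "h (pconst c1 * f - pconst r1) \<in> Q" unfolding T_def by blast
    from 3(2) obtain c2 r2 where A2: "h (pconst c2) \<notin> P" "h (pconst c2 * g - pconst r2) \<in> P"
       "h (pconst c2 * g - pconst r2) \<in> Q" unfolding T_def by blast
    have eq: "pconst (c1 * c2) * (f + g) - pconst (c2 * r1 + c1 * r2)
      = pconst c2 * (pconst c1 * f - pconst r1) + pconst c1 * (pconst c2 * g - pconst r2)"
      by (simp add: pconst_mult pconst_add algebra_simps)
    show ?case unfolding T_def
      apply (rule exI[of _ "c1 * c2"], rule exI[of _ "c2 * r1 + c1 * r2"])
      using A1 A2 prod_notP[OF A1(1) A2(1)]
      by (simp add: eq ha hm P.I_l_closed Q.I_l_closed P.a_closed Q.a_closed)
  next
    case (4 f g)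
    from 4(1) obtain c1 r1 where A1: "h (pconst c1) \<notin> P" "h (pconst c1 * f - pconst r1) \<in> P"
       "h (pconst c1 * f - pconst r1) \<in> Q" unfolding T_def by blast
    from 4(2) obtain c2 r2 where A2: "h (pconst c2) \<notin> P" "h (pconst c2 * g - pconst r2) \<in> P"
       "h (pconst c2 * g - pconst r2) \<in> Q" unfolding T_def by blast
    have eq: "pconst (c1 * c2) * (f * g) - pconst (r1 * r2)
      = (pconst c2 * g) * (pconst c1 * f - pconst r1) + pconst r1 * (pconst c2 * g - pconst r2)"
      by (simp add: pconst_mult algebra_simps)
    show ?case unfolding T_def
      apply (rule exI[of _ "c1 * c2"], rule exI[of _ "r1 * r2"])
      using A1 A2 prod_notP[OF A1(1) A2(1)]
      by (simp add: eq ha hm P.I_l_closed Q.I_l_closed P.a_closed Q.a_closed)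
  qed
  show "P \<subseteq> Q"
  proof
    fix x assume xP: "x \<in> P"
    then obtain f where xf: "x = h f" using surj P.Icarr by blast
    from \<open>T f\<close> obtain c r where C: "h (pconst c) \<notin> P" "h (pconst c * f - pconst r) \<in> P"
       "h (pconst c * f - pconst r) \<in> Q" unfolding T_def by blast
    have "pconst r = pconst c * f - (pconst c * f - pconst r)" by simp
    then have "h (pconst r) = h (pconst c) \<otimes> x \<ominus> h (pconst c * f - pconst r)"
      by (metis hd hm xf)
    then have "h (pconst r) \<in> P"
      using C(2) xP by (simp add: a_minus_def P.a_closed P.a_inv_closed P.I_l_closed)
    then have rQ: "h (pconst r) \<in> Q" using agree by blast
    have "pconst c * f = (pconst c * f - pconst r) + pconst r" by simp
    then have "h (pconst c) \<otimes> x = h (pconst c * f - pconst r) \<oplus> h (pconst r)"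
      by (metis ha hm xf)
    then have "h (pconst c) \<otimes> x \<in> Q" using C(3) rQ by (simp add: Q.a_closed)
    then show "x \<in> Q" using Q.I_prime[of "h (pconst c)" x] cQ[OF C(1)] xf by simp
  qed
qed


lemma idem_prime_facts:
  fixes A (structure)
  assumes cr: "cring A" and Pp: "primeideal P A" and e: "e \<in> carrier A" "e \<otimes> e = e"
  shows "e \<in> P \<or> \<one> \<ominus> e \<in> P" "\<not> (e \<in> P \<and> \<one> \<ominus> e \<in> P)"
    "genideal A {e} \<subseteq> P \<longleftrightarrow> e \<in> P" "genideal A {\<one> \<ominus> e} \<subseteq> P \<longleftrightarrow> \<one> \<ominus> e \<in> P"
proof -
  interpret cring A by (rule cr)
  interpret P: primeideal P A by (rule Pp)
  have c: "\<one> \<ominus> e \<in> carrier A" using e by simp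
  have "e \<otimes> (\<one> \<ominus> e) = \<zero>" using e
    by (simp add: a_minus_def r_distr r_minus r_neg)
  then show "e \<in> P \<or> \<one> \<ominus> e \<in> P" using P.I_prime[OF e(1) c] P.zero_closed by simp
  show "\<not> (e \<in> P \<and> \<one> \<ominus> e \<in> P)"
  proof
    assume "e \<in> P \<and> \<one> \<ominus> e \<in> P"
    then have "e \<oplus> (\<one> \<ominus> e) \<in> P" by (simp add: P.a_closed)
    moreover have "e \<oplus> (\<one> \<ominus> e) = \<one>" using e
      by (simp add: a_minus_def add.m_lcomm[of e] r_neg)
    ultimately show False using P.one_imp_carrier P.I_notcarr by simp
  qed
  show "genideal A {e} \<subseteq> P \<longleftrightarrow> e \<in> P"
    using Idl_subset_ideal[OF P.is_ideal, of "{e}"] e by simp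
  show "genideal A {\<one> \<ominus> e} \<subseteq> P \<longleftrightarrow> \<one> \<ominus> e \<in> P"
    using Idl_subset_ideal[OF P.is_ideal, of "{\<one> \<ominus> e}"] c by simp
qed

lemma hausdorff_generic:
  fixes A (structure)
  assumes cr: "cring A"
    and sep: "\<And>P Q. P \<in> Spec A \<Longrightarrow> Q \<in> Spec A \<Longrightarrow> P \<noteq> Q \<Longrightarrow>
        \<exists>e\<in>carrier A. e \<otimes> e = e \<and> e \<in> P \<and> e \<notin> Q"
  shows "Hausdorff_space (zariski_top A) \<and> Hausdorff_space (flat_top A)"
proof -
  interpret cring A by (rule cr)
  have prim: "primeideal P A" if "P \<in> Spec A" for P using that by (simp add: Spec_def)
  have top1: "topspace (zariski_top A) = Spec A"
  proof -
    have "Vset A (carrier A) = {}"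
    proof -
      have False if "primeideal P A" "carrier A \<subseteq> P" for P
      proof -
        interpret P: primeideal P A by (rule that(1))
        show False using that(2) P.I_notcarr P.Icarr by blast
      qed
      then show ?thesis unfolding Vset_def Spec_def by auto
    qed
    then have "Spec A \<in> {Spec A - Vset A J | J. ideal J A}" using oneideal by force
    then show ?thesis unfolding zariski_top_def by auto
  qed
  have top2: "topspace (flat_top A) = Spec A"
  proof -
    have "genideal A {} \<subseteq> P" if "P \<in> Spec A" for P
    proof -
      interpret P: primeideal P A by (rule prim[OF that])
      show ?thesis by (rule genideal_minimal[OF P.is_ideal]) simp
    qed
    then have "Vset A (genideal A {}) = Spec A" unfolding Vset_def by auto
    then have "Spec A \<in> {Vset A (genideal A F) | F. finite F \<and> F \<subseteq> carrier A}" by force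
    moreover have "Vset A (genideal A F) \<subseteq> Spec A" for F unfolding Vset_def by auto
    ultimately show ?thesis unfolding flat_top_def by auto
  qed
  show ?thesis
  proof
    show "Hausdorff_space (zariski_top A)"
      unfolding Hausdorff_space_def top1
    proof (intro allI impI, elim conjE)
      fix P Q assume P: "P \<in> Spec A" and Q: "Q \<in> Spec A" and ne: "P \<noteq> Q"
      obtain e where e: "e \<in> carrier A" "e \<otimes> e = e" "e \<in> P" "e \<notin> Q" using sep[OF P Q ne] by blast
      have c: "\<one> \<ominus> e \<in> carrier A" using e by simp
      define U where "U = Spec A - Vset A (genideal A {\<one> \<ominus> e})"
      define V where "V = Spec A - Vset A (genideal A {e})"
      have "openin (zariski_top A) U" unfolding zariski_top_def U_def
        by (rule topology_generated_by_Basis) (use genideal_ideal c in auto)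
      moreover have "openin (zariski_top A) V" unfolding zariski_top_def V_def
        by (rule topology_generated_by_Basis) (use genideal_ideal e in auto)
      moreover have "P \<in> U" using idem_prime_facts[OF cr prim[OF P] e(1,2)] P e
        unfolding U_def Vset_def by auto
      moreover have "Q \<in> V" using idem_prime_facts[OF cr prim[OF Q] e(1,2)] Q e
        unfolding V_def Vset_def by auto
      moreover have "disjnt U V"
      proof -
        have False if "X \<in> U" "X \<in> V" for X
        proof -
          have X: "X \<in> Spec A" using that U_def Vset_def by auto
          note F = idem_prime_facts[OF cr prim[OF X] e(1,2)]
          show False using that F unfolding U_def V_def Vset_def by auto
        qed
        then show ?thesis unfolding disjnt_def by blast
      qed
      ultimately show "\<exists>U V. openin (zariski_top A) U \<and> openin (zariski_top A) V \<and> P \<in> U \<and> Q \<in> V \<and> disjnt U V"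
        by blast
    qed
  next
    show "Hausdorff_space (flat_top A)"
      unfolding Hausdorff_space_def top2
    proof (intro allI impI, elim conjE)
      fix P Q assume P: "P \<in> Spec A" and Q: "Q \<in> Spec A" and ne: "P \<noteq> Q"
      obtain e where e: "e \<in> carrier A" "e \<otimes> e = e" "e \<in> P" "e \<notin> Q" using sep[OF P Q ne] by blast
      have c: "\<one> \<ominus> e \<in> carrier A" using e by simp
      define U where "U = Vset A (genideal A {e})"
      define V where "V = Vset A (genideal A {\<one> \<ominus> e})"
      have "openin (flat_top A) U" unfolding flat_top_def U_def
        by (rule topology_generated_by_Basis) (use e in auto)
      moreover have "openin (flat_top A) V" unfolding flat_top_def V_def
        by (rule topology_generated_by_Basis) (use c in auto)
      moreover have "P \<in> U" using idem_prime_facts[OF cr prim[OF P] e(1,2)] P e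
        unfolding U_def Vset_def by auto
      moreover have "Q \<in> V" using idem_prime_facts[OF cr prim[OF Q] e(1,2)] Q e
        unfolding V_def Vset_def by auto
      moreover have "disjnt U V"
      proof -
        have False if "X \<in> U" "X \<in> V" for X
        proof -
          have X: "X \<in> Spec A" using that U_def Vset_def by auto
          note F = idem_prime_facts[OF cr prim[OF X] e(1,2)]
          show False using that F unfolding U_def V_def Vset_def by auto
        qed
        then show ?thesis unfolding disjnt_def by blast
      qed
      ultimately show "\<exists>U V. openin (flat_top A) U \<and> openin (flat_top A) V \<and> P \<in> U \<and> Q \<in> V \<and> disjnt U V"
        by blast
    qed
  qed
qed


lemma (in cring) idem_compl: "e \<in> carrier R \<Longrightarrow> e \<otimes> e = e \<Longrightarrow> (\<one> \<ominus> e) \<otimes> (\<one> \<ominus> e) = \<one> \<ominus> e"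
  by (simp add: a_minus_def l_distr r_distr l_minus r_minus a_assoc r_neg1 r_neg)

lemma minus_poly: "a \<ominus>\<^bsub>(poly_ring :: ('v, 'a::comm_ring_1) mpoly ring)\<^esub> b = a - b"
proof -
  interpret cring "poly_ring :: ('v, 'a::comm_ring_1) mpoly ring" by (rule poly_ring_cring)
  have "\<ominus>\<^bsub>(poly_ring :: ('v, 'a::comm_ring_1) mpoly ring)\<^esub> b = - b"
    by (rule add.inv_equality) (auto simp: poly_ring_def)
  then show ?thesis by (simp add: a_minus_def poly_ring_def)
qed

lemma sep_idem:
  fixes A (structure) and h :: "('a, 'a::comm_ring_1) mpoly \<Rightarrow> 'b"
  assumes cr: "cring A" and hom: "h \<in> ring_hom poly_ring A"
    and rel1: "\<And>s. h (pconst s * pvar s * pvar s) = h (pvar s)"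
    and rel2: "\<And>s. h (pconst s * pconst s * pvar s) = h (pconst s)"
    and surj: "\<And>x. x \<in> carrier A \<Longrightarrow> \<exists>f. x = h f"
    and P: "P \<in> Spec A" and Q: "Q \<in> Spec A" and ne: "P \<noteq> Q"
  shows "\<exists>e\<in>carrier A. e \<otimes> e = e \<and> e \<in> P \<and> e \<notin> Q"
proof -
  interpret cring A by (rule cr)
  have Pp: "primeideal P A" and Qp: "primeideal Q A" using P Q by (auto simp: Spec_def)
  have hc[simp]: "h f \<in> carrier A" for f
    using ring_hom_closed[OF hom, of f] by (simp add: poly_ring_def)
  have hm: "h (f * g) = h f \<otimes> h g" for f g
    using ring_hom_mult[OF hom, of f g] by (simp add: poly_ring_def)
  obtain r where r: "\<not> (h (pconst r) \<in> P \<longleftrightarrow> h (pconst r) \<in> Q)"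
  proof -
    have "\<exists>r. \<not> (h (pconst r) \<in> P \<longleftrightarrow> h (pconst r) \<in> Q)"
    proof (rule ccontr)
      assume "\<nexists>r. \<not> (h (pconst r) \<in> P \<longleftrightarrow> h (pconst r) \<in> Q)"
      then have ag: "\<And>r. h (pconst r) \<in> P \<longleftrightarrow> h (pconst r) \<in> Q" by blast
      have "P \<subseteq> Q" by (rule sep_core[OF cr hom rel1 rel2 Pp Qp ag surj])
      moreover have "Q \<subseteq> P" by (rule sep_core[OF cr hom rel1 rel2 Qp Pp]) (use ag surj in auto)
      ultimately show False using ne by blast
    qed
    then show ?thesis using that by blast
  qed
  define e where "e = h (pconst r * pvar r)"
  have ec: "e \<in> carrier A" unfolding e_def by simp
  have eq2: "h (pconst r) = h (pconst r) \<otimes> e"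
    unfolding e_def using rel2[of r] by (simp add: hm m_assoc)
  have eidem: "e \<otimes> e = e"
  proof -
    have "e \<otimes> e = h (pconst r * pconst r * pvar r) \<otimes> h (pvar r)"
      unfolding e_def by (simp add: hm m_ac)
    also have "\<dots> = e" unfolding rel2 e_def by (simp add: hm)
    finally show ?thesis .
  qed
  have memiff: "e \<in> X \<longleftrightarrow> h (pconst r) \<in> X" if "primeideal X A" for X
  proof -
    interpret X: primeideal X A by (rule that)
    show ?thesis
    proof
      assume "e \<in> X" then show "h (pconst r) \<in> X" using eq2 X.I_l_closed by (metis hc)
    next
      assume "h (pconst r) \<in> X" then show "e \<in> X" unfolding e_def using X.I_r_closed by (simp add: hm)
    qed
  qed
  show ?thesis
  proof (cases "h (pconst r) \<in> P")
    case True
    then show ?thesis using r memiff[OF Pp] memiff[OF Qp] ec eidem by blast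
  next
    case False
    then have "e \<notin> P" "e \<in> Q" using r memiff[OF Pp] memiff[OF Qp] by auto
    then have "\<one> \<ominus> e \<in> P" "\<one> \<ominus> e \<notin> Q"
      using idem_prime_facts(1,2)[OF cr Pp ec eidem] idem_prime_facts(1,2)[OF cr Qp ec eidem] by auto
    moreover have "\<one> \<ominus> e \<in> carrier A" using ec by simp
    ultimately show ?thesis using idem_compl[OF ec eidem] by blast
  qed
qed

theorem lemma3p7:
  shows "Hausdorff_space (zariski_top (ptwise_loc (UNIV :: 'a::comm_ring_1 set)))
       \<and> Hausdorff_space (flat_top (ptwise_loc (UNIV :: 'a::comm_ring_1 set)))"
proof -
  let ?R = "poly_ring :: ('a, 'a) mpoly ring"
  define I where "I = ptwise_ideal (UNIV :: 'a set)"
  interpret R: cring ?R by (rule poly_ring_cring)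
  have idl: "ideal I ?R" unfolding I_def ptwise_ideal_def
    by (rule R.genideal_ideal) (simp add: poly_ring_def)
  interpret I: ideal I ?R by (rule idl)
  define h where "h = (\<lambda>f. I +>\<^bsub>?R\<^esub> f)"
  have cr: "cring (?R Quot I)" by (rule I.quotient_is_cring[OF R.is_cring])
  have hom: "h \<in> ring_hom ?R (?R Quot I)" unfolding h_def by (rule I.rcos_ring_hom)
  have eqI: "h a = h b" if "a - b \<in> I" for a b
  proof -
    have c: "a \<in> carrier ?R" "b \<in> carrier ?R" by (simp_all add: poly_ring_def)
    show ?thesis using R.quotient_eq_iff_same_a_r_cos[OF idl c] that
      unfolding minus_poly h_def by simp
  qed
  have gen: "x \<in> I" if "x \<in> (\<Union>s\<in>UNIV. {pconst s * pvar s ^ 2 - pvar s, pconst s ^ 2 * pvar s - pconst s})" for x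
    using R.genideal_self[of "\<Union>s\<in>UNIV. {pconst s * pvar s ^ 2 - pvar s, pconst s ^ 2 * pvar s - (pconst s :: ('a, 'a) mpoly)}"] that
    unfolding I_def ptwise_ideal_def by (auto simp: poly_ring_def)
  have rel1: "h (pconst s * pvar s * pvar s) = h (pvar s)" for s
    by (rule eqI, rule gen) (auto simp: power2_eq_square mult.assoc)
  have rel2: "h (pconst s * pconst s * pvar s) = h (pconst s)" for s
    by (rule eqI, rule gen) (auto simp: power2_eq_square mult.assoc)
  have surj: "\<exists>f. x = h f" if "x \<in> carrier (?R Quot I)" for x
    using that unfolding FactRing_def A_RCOSETS_def' h_def by auto
  have "Hausdorff_space (zariski_top (?R Quot I)) \<and> Hausdorff_space (flat_top (?R Quot I))"
    by (rule hausdorff_generic[OF cr sep_idem[OF cr hom rel1 rel2 surj]])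
  then show ?thesis unfolding ptwise_loc_def I_def .
qed

end
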